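(* Let $g\in\Lambda_*$. There is a constant $C$ such that for every triple $a<x<b$ of real numbers, \[\frac{(g(x)-g(a))^2}{x-a}+\frac{(g(x)-g(b))^2}{b-x}\le\frac{(g(b)-g(a))^2}{b-a}+C(b-a).\] Consequently, for every bounded interval $[a,b]$ there is $C'$ such that for every partition $a=x_0<\dots<x_N=b$, $\sum_{j=1}^N\frac{|g(x_j)-g(x_{j-1})|^2}{x_j-x_{j-1}}\le C'\log(N+1)$.
   Context: The Zygmund class $\Lambda_*$ consists of continuous $g\colon\mathbb{R}\to\mathbb{R}$ for which there is $M>0$ with $|g(x+h)-2g(x)+g(x-h)|\le 2Mh$ for all $x\in\mathbb{R}$, $h>0$. *)

theory Defs
  imports Complex_Main
begin

definition zygmund :: "(real \<Rightarrow> real) \<Rightarrow> bool" where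
  "zygmund g \<longleftrightarrow> continuous_on UNIV g \<and>
     (\<exists>M>0. \<forall>x h. h > 0 \<longrightarrow> \<bar>g (x + h) - 2 * g x + g (x - h)\<bar> \<le> 2 * M * h)"

end

theory Submission imports Defs begin

definition Z :: "real \<Rightarrow> (real \<Rightarrow> real) \<Rightarrow> bool" where
  "Z M g \<longleftrightarrow> (\<forall>t. isCont g t) \<and> (\<forall>x h. h > 0 \<longrightarrow> \<bar>g (x + h) - 2 * g x + g (x - h)\<bar> \<le> 2 * M * h)"

lemma Z_M_nonneg: "Z M g \<Longrightarrow> M \<ge> 0"
  unfolding Z_def
proof -
  assume "(\<forall>t. isCont g t) \<and> (\<forall>x h. h > 0 \<longrightarrow> \<bar>g (x + h) - 2 * g x + g (x - h)\<bar> \<le> 2 * M * h)"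
  then have "\<bar>g (0 + 1) - 2 * g 0 + g (0 - 1)\<bar> \<le> 2 * M * 1"
    by (metis zero_less_one)
  then show "M \<ge> 0" by linarith
qed

lemma lemA:
  assumes Z: "Z M g" and ab: "a < b" and t: "a \<le> t" "t \<le> b"
  shows "\<bar>g t - g a - (t - a) / (b - a) * (g b - g a)\<bar> \<le> M * (b - a)"
proof -
  define L where "L = b - a"
  have L: "L > 0" using ab L_def by simp
  define \<phi> where "\<phi> s = g s - g a - (s - a) / L * (g b - g a)" for s
  have cont: "isCont (\<lambda>s. \<bar>\<phi> s\<bar>) s" for s
    using Z L unfolding Z_def \<phi>_def by (intro continuous_intros) auto
  obtain S where S1: "\<forall>s. a \<le> s \<and> s \<le> b \<longrightarrow> \<bar>\<phi> s\<bar> \<le> S"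
     and S2: "\<exists>x\<ge>a. x \<le> b \<and> \<bar>\<phi> x\<bar> = S"
    using isCont_eq_Ub[of a b "\<lambda>s. \<bar>\<phi> s\<bar>"] ab cont by auto
  obtain x where x: "a \<le> x" "x \<le> b" "\<bar>\<phi> x\<bar> = S" using S2 by auto
  have pa: "\<phi> a = 0" by (simp add: \<phi>_def)
  have pb: "\<phi> b = 0" using L by (simp add: \<phi>_def L_def)
  have sd: "\<bar>\<phi> (x + h) - 2 * \<phi> x + \<phi> (x - h)\<bar> \<le> 2 * M * h" if "h > 0" for h
  proof -
    have "(x+h-a)/L*(g b - g a) - 2*((x-a)/L*(g b - g a)) + (x-h-a)/L*(g b - g a) = 0"
      using L by (simp add: field_simps)
    then have "\<phi> (x + h) - 2 * \<phi> x + \<phi> (x - h) = g (x + h) - 2 * g x + g (x - h)"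
      unfolding \<phi>_def by (simp add: algebra_simps)
    then show ?thesis using Z that unfolding Z_def by metis
  qed
  have "S \<le> M * L"
  proof (cases "x = a \<or> x = b")
    case True
    then have "S = 0" using x pa pb by auto
    moreover have "M \<ge> 0" using Z by (rule Z_M_nonneg)
    ultimately show ?thesis using L by simp
  next
    case False
    then have ax: "a < x" "x < b" using x by auto
    show ?thesis
    proof (cases "x - a \<le> b - x")
      case True
      define h where "h = x - a"
      have h: "h > 0" using ax h_def by simp
      have "\<bar>\<phi> (x + h)\<bar> \<le> S" using S1 True h_def ax by auto
      moreover have "\<phi> (x - h) = 0" using pa h_def by simp
      ultimately have "2 * S \<le> S + 2 * M * h" using sd[OF h] x(3) by linarith
      moreover have "2 * h \<le> L" using True h_def L_def by linarith
      moreover have "M \<ge> 0" using Z by (rule Z_M_nonneg)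
      ultimately have "S \<le> M * (2 * h)" "M * (2 * h) \<le> M * L" by (auto intro: mult_left_mono)
      then show ?thesis by linarith
    next
      case False
      define h where "h = b - x"
      have h: "h > 0" using ax h_def by simp
      have "\<bar>\<phi> (x - h)\<bar> \<le> S" using S1 False h_def ax by auto
      moreover have "\<phi> (x + h) = 0" using pb h_def by simp
      ultimately have "2 * S \<le> S + 2 * M * h" using sd[OF h] x(3) by linarith
      moreover have "2 * h \<le> L" using False h_def L_def by linarith
      moreover have "M \<ge> 0" using Z by (rule Z_M_nonneg)
      ultimately have "S \<le> M * (2 * h)" "M * (2 * h) \<le> M * L" by (auto intro: mult_left_mono)
      then show ?thesis by linarith
    qed
  qed
  then show ?thesis using S1 t unfolding \<phi>_def L_def by fastforce
qed

lemma lemB: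
  assumes Z: "Z M g"
  shows "0 < u \<Longrightarrow> u \<le> L \<Longrightarrow> L \<le> 2^k * u \<Longrightarrow>
    \<bar>g (a + u) - g a - u / L * (g (a + L) - g a)\<bar> \<le> M * u * (real k + 2)"
proof (induction k arbitrary: L)
  case 0
  then have "L = u" by simp
  then show ?case using 0 Z_M_nonneg[OF Z] by simp
next
  case (Suc k)
  have M: "M \<ge> 0" using Z_M_nonneg[OF Z] .
  show ?case
  proof (cases "L \<le> 2 * u")
    case True
    have "\<bar>g (a + u) - g a - (a + u - a) / (a + L - a) * (g (a + L) - g a)\<bar> \<le> M * (a + L - a)"
      using lemA[OF Z, of a "a + L" "a + u"] Suc.prems by simp
    then have "\<bar>g (a + u) - g a - u / L * (g (a + L) - g a)\<bar> \<le> M * L" by simp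
    also have "M * L \<le> M * u * (real (Suc k) + 2)"
    proof -
      have "2 * u \<le> u * (real (Suc k) + 2)" using Suc.prems by (simp add: mult_left_mono)
      then have "L \<le> u * (real (Suc k) + 2)" using True by linarith
      then show ?thesis using M by (metis mult.assoc mult_left_mono)
    qed
    finally show ?thesis .
  next
    case False
    have IH: "\<bar>g (a + u) - g a - u / (L/2) * (g (a + L/2) - g a)\<bar> \<le> M * u * (real k + 2)"
      using Suc.IH[of "L/2"] Suc.prems False by simp
    have L: "L > 0" using Suc.prems by simp
    have zz: "\<bar>g (a + L/2 + L/2) - 2 * g (a + L/2) + g (a + L/2 - L/2)\<bar> \<le> 2 * M * (L/2)"
    proof -
      have "L/2 > 0" using L by simp
      then show ?thesis using Z unfolding Z_def by blast
    qed
    then have zz: "\<bar>g (a + L) - 2 * g (a + L/2) + g a\<bar> \<le> M * L" by (simp add: add.commute)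
    have eq: "u / (L/2) * (g (a + L/2) - g a) - u / L * (g (a + L) - g a)
        = - (u / L) * (g (a + L) - 2 * g (a + L/2) + g a)"
      using L by (simp add: field_simps)
    have "\<bar>- (u / L) * (g (a + L) - 2 * g (a + L/2) + g a)\<bar> = (u / L) * \<bar>g (a + L) - 2 * g (a + L/2) + g a\<bar>"
      using L Suc.prems by (simp add: abs_mult)
    also have "\<dots> \<le> (u / L) * (M * L)"
      using zz L Suc.prems by (intro mult_left_mono) auto
    also have "\<dots> = M * u" using L by simp
    finally have "\<bar>u / (L/2) * (g (a + L/2) - g a) - u / L * (g (a + L) - g a)\<bar> \<le> M * u"
      using eq by simp
    with IH have "\<bar>g (a + u) - g a - u / L * (g (a + L) - g a)\<bar> \<le> M * u * (real k + 2) + M * u"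
      using abs_triangle_ineq[of "g (a + u) - g a - u / (L/2) * (g (a + L/2) - g a)"
          "u / (L/2) * (g (a + L/2) - g a) - u / L * (g (a + L) - g a)"] by (smt (verit))
    then show ?thesis by (simp add: algebra_simps)
  qed
qed

lemma pow_bound: "(real j + 3)^2 \<le> 9 * 2^j"
proof (induction j)
  case 0 then show ?case by simp
next
  case (Suc j)
  have "(real (Suc j) + 3)^2 \<le> 2 * (real j + 3)^2"
    by (simp add: power2_eq_square algebra_simps)
  then show ?case using Suc by simp
qed

lemma lemD:
  assumes Z: "Z M g" and ax: "a < x" and xb: "x < b" and uv: "x - a \<le> b - x"
  shows "((b-a)*g x - (b-x)*g a - (x-a)*g b)^2 \<le> 18*M^2*(x-a)*(b-x)*(b-a)^2"
proof -
  define u where "u = x - a"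
  define v where "v = b - x"
  define L where "L = b - a"
  have u: "u > 0" "u < L" "L \<le> 2 * v" "v > 0" using ax xb uv u_def v_def L_def by auto
  have M: "M \<ge> 0" using Z by (rule Z_M_nonneg)
  obtain n where n: "L / u < 2^n" using real_arch_pow[of 2 "L/u"] by auto
  have "L \<le> 2^n * u" using n u by (simp add: field_simps)
  define k where "k = (LEAST k. L \<le> 2^k * u)"
  have k1: "L \<le> 2^k * u" unfolding k_def by (rule LeastI) fact
  have "k \<noteq> 0"
  proof
    assume "k = 0" then show False using k1 u by simp
  qed
  then obtain j where j: "k = Suc j" by (cases k) auto
  have "\<not> L \<le> 2^j * u" by (rule not_less_Least) (simp add: j flip: k_def)
  then have j2: "2^j * u < L" by simp
  define \<phi> where "\<phi> = g (a + u) - g a - u / L * (g (a + L) - g a)"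
  have phi: "\<bar>\<phi>\<bar> \<le> M * u * (real k + 2)"
    unfolding \<phi>_def by (rule lemB[OF Z]) (use u k1 in auto)
  have E: "(b-a)*g x - (b-x)*g a - (x-a)*g b = L * \<phi>"
    using u unfolding \<phi>_def u_def L_def by (simp add: field_simps)
  have "\<phi>^2 \<le> (M * u * (real j + 3))^2"
  proof -
    have "\<bar>\<phi>\<bar> \<le> M * u * (real j + 3)" using phi j by (simp add: add.commute)
    then have "\<bar>\<phi>\<bar>^2 \<le> (M * u * (real j + 3))^2" by (rule power_mono) simp
    then show ?thesis by simp
  qed
  also have "\<dots> = M^2 * u^2 * (real j + 3)^2" by (simp add: power_mult_distrib)
  also have "\<dots> \<le> M^2 * u^2 * (9 * 2^j)"
    by (rule mult_left_mono[OF pow_bound]) simp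
  also have "\<dots> = 9 * M^2 * u * (2^j * u)" by (simp add: power2_eq_square)
  also have "\<dots> \<le> 9 * M^2 * u * L"
    using j2 u by (intro mult_left_mono) auto
  also have "\<dots> \<le> 9 * M^2 * u * (2 * v)"
    using u by (intro mult_left_mono) auto
  finally have "\<phi>^2 \<le> 18 * M^2 * u * v" by simp
  then have "L^2 * \<phi>^2 \<le> L^2 * (18 * M^2 * u * v)" by (intro mult_left_mono) auto
  moreover have "(L * \<phi>)^2 = L^2 * \<phi>^2" by (simp add: power_mult_distrib)
  ultimately have "(L * \<phi>)^2 \<le> 18*M^2*u*v*L^2" by (simp add: algebra_simps)
  then show ?thesis unfolding E u_def v_def L_def .
qed

lemma Z_of_zygmund: "zygmund g \<Longrightarrow> \<exists>M. Z M g"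
  unfolding zygmund_def Z_def using continuous_on_eq_continuous_at[of UNIV g] by auto

lemma Z_reflect:
  assumes Z: "Z M g"
  shows "Z M (\<lambda>t. g (- t))"
proof -
  have c: "\<And>t. isCont g t" and s: "\<And>x h. h > 0 \<Longrightarrow> \<bar>g (x + h) - 2 * g x + g (x - h)\<bar> \<le> 2 * M * h"
    using Z unfolding Z_def by auto
  have c2: "isCont (\<lambda>t. g (- t)) t" for t
    by (rule isCont_o2[where f="\<lambda>x. - x"]) (auto intro: c)
  have s2: "\<bar>g (- (x + h)) - 2 * g (- x) + g (- (x - h))\<bar> \<le> 2 * M * h" if h: "h > 0" for x h
  proof -
    have e1: "- (x + h) = -x - h" and e2: "- (x - h) = -x + h" by simp_all
    have "\<bar>g (-x + h) - 2 * g (-x) + g (-x - h)\<bar> \<le> 2 * M * h" using s[OF h] .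
    then show ?thesis unfolding e1 e2 by arith
  qed
  show ?thesis unfolding Z_def using c2 s2 by blast
qed

lemma key_identity:
  fixes u v A B :: real
  assumes "u > 0" "v > 0"
  shows "A^2/u + B^2/v = (A+B)^2/(u+v) + (v*A - u*B)^2/(u*v*(u+v))"
proof -
  have p: "u + v > 0" using assms by simp
  have D: "u*v*(u+v) \<noteq> 0" using assms p by simp
  have "A^2/u + B^2/v = (A^2*v*(u+v) + B^2*u*(u+v))/(u*v*(u+v))"
    unfolding eq_divide_eq using D assms p by (simp add: algebra_simps power2_eq_square)
  also have "(A+B)^2/(u+v) = ((A+B)^2*u*v)/(u*v*(u+v))"
  proof -
    have "((A+B)^2*u*v)/(u*v*(u+v)) = ((u*v)*(A+B)^2)/((u*v)*(u+v))" by (simp add: ac_simps)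
    also have "\<dots> = (A+B)^2/(u+v)" using assms by (subst mult_divide_mult_cancel_left) auto
    finally show ?thesis by simp
  qed
  moreover have "(A^2*v*(u+v) + B^2*u*(u+v)) = (A+B)^2*u*v + (v*A - u*B)^2"
    by (simp add: power2_eq_square algebra_simps)
  ultimately show ?thesis by (simp add: add_divide_distrib)
qed

lemma part1:
  assumes "zygmund g"
  shows "\<exists>C\<ge>0. \<forall>a x b. a < x \<and> x < b \<longrightarrow>
            (g x - g a)^2 / (x - a) + (g x - g b)^2 / (b - x)
              \<le> (g b - g a)^2 / (b - a) + C * (b - a)"
proof -
  obtain M where Z: "Z M g" using Z_of_zygmund[OF assms] by auto
  have M: "M \<ge> 0" using Z by (rule Z_M_nonneg)
  have Z': "Z M (\<lambda>t. g (- t))" using Z by (rule Z_reflect)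
  show ?thesis
  proof (intro exI[of _ "18 * M^2"] conjI allI impI)
    show "0 \<le> 18 * M^2" by simp
    fix a x b :: real assume axb: "a < x \<and> x < b"
    define u where "u = x - a"
    define v where "v = b - x"
    define E where "E = (b-a)*g x - (b-x)*g a - (x-a)*g b"
    have u: "u > 0" "v > 0" using axb u_def v_def by auto
    have EE: "E^2 \<le> 18*M^2*u*v*(b-a)^2"
    proof (cases "x - a \<le> b - x")
      case True
      then show ?thesis unfolding E_def u_def v_def using lemD[OF Z, of a x b] axb by blast
    next
      case False
      have "((b - a)*g x - (x - a)*g b - (b - x)*g a)^2
            \<le> 18*M^2*(b - x)*(x - a)*(b - a)^2"
        using lemD[OF Z', of "-b" "-x" "-a"] axb False by simp
      moreover have "E = (b - a)*g x - (x - a)*g b - (b - x)*g a" unfolding E_def by simp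
      moreover have "18*M^2*(b - x)*(x - a)*(b - a)^2 = 18*M^2*u*v*(b-a)^2"
        unfolding u_def v_def by (simp only: mult_ac)
      ultimately show ?thesis by simp
    qed
    have E2: "E = v * (g x - g a) - u * (g b - g x)"
      unfolding E_def u_def v_def by (simp add: algebra_simps)
    have L: "u + v = b - a" unfolding u_def v_def by simp
    have e1: "(g x - g a)^2 / (x - a) + (g x - g b)^2 / (b - x)
        = (g x - g a)^2 / u + (g b - g x)^2 / v"
      unfolding u_def v_def by (simp add: power2_commute[of "g x" "g b"])
    have e2: "(g x - g a)^2 / u + (g b - g x)^2 / v = (g b - g a)^2 / (b - a) + E^2 / (u * v * (b - a))"
      using key_identity[OF u, of "g x - g a" "g b - g x"] unfolding E2 L by simp
    have p: "u * v * (b - a) > 0" using u L by (metis add_pos_pos mult_pos_pos)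
    have "E^2 \<le> (18 * M^2 * (b - a)) * (u * v * (b - a))"
      using EE by (simp only: power2_eq_square mult_ac)
    then have e3: "E^2 / (u * v * (b - a)) \<le> 18 * M^2 * (b - a)"
      using p by (simp only: divide_le_eq) simp
    show "(g x - g a)^2 / (x - a) + (g x - g b)^2 / (b - x)
              \<le> (g b - g a)^2 / (b - a) + 18 * M^2 * (b - a)" using e1 e2 e3 by linarith
  qed
qed

lemma mono_range:
  assumes "\<forall>j. m \<le> j \<and> j < n \<longrightarrow> (y::nat\<Rightarrow>real) j < y (Suc j)"
  shows "m \<le> i \<Longrightarrow> i < i' \<Longrightarrow> i' \<le> n \<Longrightarrow> y i < y i'"
proof (induction i')
  case 0 then show ?case by simp
next
  case (Suc i'')
  show ?case
  proof (cases "i = i''")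
    case True then show ?thesis using assms Suc.prems by auto
  next
    case False
    then have "y i < y i''" using Suc by auto
    also have "y i'' < y (Suc i'')" using assms Suc.prems by auto
    finally show ?thesis .
  qed
qed

lemma half_bound:
  assumes "(d::nat) \<ge> 2"
  shows "2 * (d - d div 2)^2 \<le> d^2"
proof -
  obtain q where q: "d = 2*q \<or> d = 2*q+1" by (metis odd_two_times_div_two_succ even_two_times_div_two)
  show ?thesis
  proof (cases "d = 2*q")
    case True
    then have "d - d div 2 = q" by simp
    then show ?thesis using True by (simp add: power2_eq_square)
  next
    case False
    then have d: "d = 2*q+1" using q by simp
    then have q1: "q \<ge> 1" using assms by simp
    have "d - d div 2 = q + 1" using d by simp
    moreover have "2 * (q+1)^2 \<le> (2*q+1)^2"
    proof -
      have "1 \<le> 2*q*q" using q1 by (metis le_square mult_le_mono one_le_mult_iff order_trans nat_mult_1 mult.assoc le_add2 mult_2 le_trans)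
      then show ?thesis by (simp add: power2_eq_square algebra_simps)
    qed
    ultimately show ?thesis using d by simp
  qed
qed

lemma part2:
  fixes g :: "real \<Rightarrow> real" and C :: real
  assumes C: "C \<ge> 0"
    and P1: "\<forall>a x b. a < x \<and> x < b \<longrightarrow>
            (g x - g a)^2 / (x - a) + (g x - g b)^2 / (b - x)
              \<le> (g b - g a)^2 / (b - a) + C * (b - a)"
  shows "d \<ge> 1 \<Longrightarrow> (\<forall>j. m \<le> j \<and> j < m + d \<longrightarrow> y j < y (Suc j)) \<Longrightarrow>
    (\<Sum>j=m+1..m+d. (g (y j) - g (y (j - 1)))^2 / (y j - y (j - 1)))
      \<le> (g (y (m+d)) - g (y m))^2 / (y (m+d) - y m) + C * (y (m+d) - y m) * (2 * log 2 (real d))"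
proof (induction d arbitrary: m rule: less_induct)
  case (less d)
  show ?case
  proof (cases "d = 1")
    case True
    then show ?thesis by simp
  next
    case False
    then have d2: "d \<ge> 2" using less.prems by simp
    define k where "k = d div 2"
    define r where "r = d - k"
    have kr: "k \<ge> 1" "r \<ge> 1" "k < d" "r < d" "k \<le> r" "d = k + r"
      using d2 unfolding k_def r_def by auto
    let ?f = "\<lambda>j. (g (y j) - g (y (j - 1)))^2 / (y j - y (j - 1))"
    have split: "(\<Sum>j=m+1..m+d. ?f j) = (\<Sum>j=m+1..m+k. ?f j) + (\<Sum>j=m+k+1..m+k+r. ?f j)"
      using sum.ub_add_nat[of "m+1" "m+k" ?f r] kr by (simp add: add.assoc)
    have IH1: "(\<Sum>j=m+1..m+k. ?f j) \<le> (g (y (m+k)) - g (y m))^2 / (y (m+k) - y m)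
        + C * (y (m+k) - y m) * (2 * log 2 (real k))"
      using less.IH[of k m] less.prems kr by auto
    have IH2: "(\<Sum>j=m+k+1..m+k+r. ?f j) \<le> (g (y (m+k+r)) - g (y (m+k)))^2 / (y (m+k+r) - y (m+k))
        + C * (y (m+k+r) - y (m+k)) * (2 * log 2 (real r))"
      using less.IH[of r "m+k"] less.prems kr by (auto simp: add.assoc)
    have mo: "\<forall>j. m \<le> j \<and> j < m + d \<longrightarrow> y j < y (Suc j)" using less.prems by simp
    have y1: "y m < y (m+k)" using mono_range[OF mo, of m "m+k"] kr by simp
    have y2: "y (m+k) < y (m+d)" using mono_range[OF mo, of "m+k" "m+d"] kr by simp
    define a where "a = y m"
    define x where "x = y (m+k)"
    define b where "b = y (m+d)"
    have bb: "y (m+k+r) = b" unfolding b_def using kr by (simp add: add.assoc)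
    have P0: "(g x - g a)^2 / (x - a) + (g x - g b)^2 / (b - x)
              \<le> (g b - g a)^2 / (b - a) + C * (b - a)"
      using P1 y1 y2 unfolding a_def x_def b_def by blast
    have "(g x - g b)^2 = (g b - g x)^2" by (rule power2_commute)
    with P0 have P: "(g x - g a)^2 / (x - a) + (g b - g x)^2 / (b - x)
              \<le> (g b - g a)^2 / (b - a) + C * (b - a)" by simp
    have lk: "log 2 (real k) \<le> log 2 (real r)" using kr by simp
    have L1: "x - a \<ge> 0" "b - x \<ge> 0" using y1 y2 unfolding a_def x_def b_def by auto
    have t1: "C * (x - a) * (2 * log 2 (real k)) \<le> C * (x - a) * (2 * log 2 (real r))"
      using lk C L1 by (intro mult_left_mono) auto
    have lg: "1 + 2 * log 2 (real r) \<le> 2 * log 2 (real d)"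
    proof -
      have n: "2 * (r)^2 \<le> d^2" using half_bound[OF d2] unfolding r_def k_def .
      then have "real (2 * r^2) \<le> real (d^2)" by (simp only: of_nat_le_iff)
      then have n': "2 * (real r)^2 \<le> (real d)^2" by simp
      have "1 + 2 * log 2 (real r) = log 2 (2 * (real r)^2)"
        using kr by (simp add: log_mult log_nat_power)
      also have "\<dots> \<le> log 2 ((real d)^2)" using n' kr by simp
      also have "\<dots> = 2 * log 2 (real d)" using kr by (simp add: log_nat_power)
      finally show ?thesis .
    qed
    have t2: "C * (b - a) * (1 + 2 * log 2 (real r)) \<le> C * (b - a) * (2 * log 2 (real d))"
      using lg C L1 by (intro mult_left_mono) auto
    have "(\<Sum>j=m+1..m+d. ?f j) \<le> (g x - g a)^2 / (x - a) + C * (x - a) * (2 * log 2 (real k))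
        + (g b - g x)^2 / (b - x) + C * (b - x) * (2 * log 2 (real r))"
      using split IH1 IH2 unfolding a_def x_def b_def bb[unfolded b_def] by linarith
    also have "\<dots> \<le> (g b - g a)^2 / (b - a) + C * (b - a) * (1 + 2 * log 2 (real r))"
      using P t1 by (simp add: algebra_simps)
    also have "\<dots> \<le> (g b - g a)^2 / (b - a) + C * (b - a) * (2 * log 2 (real d))"
      using t2 by simp
    finally show ?thesis unfolding a_def b_def .
  qed
qed

theorem mainTheorem9:
  fixes g :: "real \<Rightarrow> real"
  assumes "zygmund g"
  shows "(\<exists>C. \<forall>a x b. a < x \<and> x < b \<longrightarrow>
            (g x - g a)^2 / (x - a) + (g x - g b)^2 / (b - x)
              \<le> (g b - g a)^2 / (b - a) + C * (b - a))
       \<and> (\<forall>a b. a < b \<longrightarrow> (\<exists>C'. \<forall>(N::nat) (y::nat \<Rightarrow> real).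
            y 0 = a \<and> y N = b \<and> (\<forall>j<N. y j < y (Suc j)) \<longrightarrow>
            (\<Sum>j=1..N. \<bar>g (y j) - g (y (j - 1))\<bar>^2 / (y j - y (j - 1)))
              \<le> C' * ln (real N + 1)))"
proof -
  obtain C where C: "C \<ge> 0" and P1: "\<forall>a x b. a < x \<and> x < b \<longrightarrow>
            (g x - g a)^2 / (x - a) + (g x - g b)^2 / (b - x)
              \<le> (g b - g a)^2 / (b - a) + C * (b - a)"
    using part1[OF assms] by blast
  have II: "\<exists>C'. \<forall>(N::nat) (y::nat \<Rightarrow> real).
            y 0 = a \<and> y N = b \<and> (\<forall>j<N. y j < y (Suc j)) \<longrightarrow>
            (\<Sum>j=1..N. \<bar>g (y j) - g (y (j - 1))\<bar>^2 / (y j - y (j - 1)))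
              \<le> C' * ln (real N + 1)" if ab: "a < b" for a b
  proof -
    define Q where "Q = (g b - g a)^2 / (b - a)"
    have Q: "Q \<ge> 0" unfolding Q_def using ab by simp
    have l2: "ln 2 > (0::real)" by simp
    show ?thesis
    proof (intro exI[of _ "Q / ln 2 + 2 * C * (b - a) / ln 2"] allI impI)
      fix N :: nat and y :: "nat \<Rightarrow> real"
      assume h: "y 0 = a \<and> y N = b \<and> (\<forall>j<N. y j < y (Suc j))"
      have N: "N \<ge> 1" using h ab by (cases N) auto
      have S: "(\<Sum>j=0+1..0+N. (g (y j) - g (y (j - 1)))^2 / (y j - y (j - 1)))
        \<le> (g (y (0+N)) - g (y 0))^2 / (y (0+N) - y 0) + C * (y (0+N) - y 0) * (2 * log 2 (real N))"
        by (rule part2[OF C P1 N]) (use h in auto)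
      have S': "(\<Sum>j=1..N. \<bar>g (y j) - g (y (j - 1))\<bar>^2 / (y j - y (j - 1)))
          \<le> Q + C * (b - a) * (2 * (ln (real N) / ln 2))"
        using S h unfolding Q_def by (simp add: log_def)
      have lnN: "ln (real N) \<le> ln (real N + 1)" using N by simp
      have ln2: "ln 2 \<le> ln (real N + 1)" using N by simp
      have CL: "C * (b - a) \<ge> 0" using C ab by simp
      have A1: "Q \<le> Q / ln 2 * ln (real N + 1)"
      proof -
        have "Q * ln 2 \<le> Q * ln (real N + 1)" using Q ln2 by (intro mult_left_mono)
        then show ?thesis using l2 by (simp add: field_simps)
      qed
      have A2: "C * (b - a) * (2 * (ln (real N) / ln 2)) \<le> 2 * C * (b - a) / ln 2 * ln (real N + 1)"
      proof -
        have "C * (b - a) * 2 * ln (real N) \<le> C * (b - a) * 2 * ln (real N + 1)"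
          using CL lnN by (intro mult_left_mono) auto
        then have "C * (b - a) * 2 * ln (real N) / ln 2 \<le> C * (b - a) * 2 * ln (real N + 1) / ln 2"
          using l2 by (intro divide_right_mono) auto
        moreover have "C * (b - a) * (2 * (ln (real N) / ln 2)) = C * (b - a) * 2 * ln (real N) / ln 2"
          by simp
        moreover have "2 * C * (b - a) / ln 2 * ln (real N + 1) = C * (b - a) * 2 * ln (real N + 1) / ln 2"
          by simp
        ultimately show ?thesis by linarith
      qed
      show "(\<Sum>j=1..N. \<bar>g (y j) - g (y (j - 1))\<bar>^2 / (y j - y (j - 1)))
              \<le> (Q / ln 2 + 2 * C * (b - a) / ln 2) * ln (real N + 1)"
        using S' A1 A2 by (simp add: distrib_right)
    qed
  qed
  show ?thesis using P1 II by blast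
qed

end
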